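(* Assume $\inf_{x\in X}\mu(B_x(1/2))>0$, and let $Z\subset X$ and $N:\mathbb{R}\to\mathbb{N}$ be such that $X=\bigcup_{z\in Z}B_z(1)$ and, for every $x\in X$ and $r\ge1$, the number of $z\in Z$ with $B_z(r)\cap B_x(r)\neq\emptyset$ is at most $N(r)$. Then for every controlled operator $T\in\mathscr{B}(X)$, $$\|T\|\le N(d(T)+1)^{1/2}\sup_{x\in X}\|\mathbf{1}_{B_x(1)}T\|.$$
   Context: $(X,d)$ is a non-compact proper metric space, $B_x(r)=\{y:d(x,y)\le r\}$, and $\mu$ is a Radon measure with support $X$ such that $\mu(B_x(r))>0$ and $\sup_x\mu(B_x(r))<\infty$ for all $r>0$. $\mathscr{B}(X)$ is the algebra of bounded operators on $L^2(X,\mu)$; $\mathbf{1}_A$ is multiplication by the characteristic function of measurable $A$. $T$ is controlled if there is $r>0$ such that $\mathbf{1}_FT\mathbf{1}_G=0$ for all closed $F,G$ with $d(F,G)>r$; $d(T)$ is the smallest such $r$. *)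

theory Defs
  imports "HOL-Analysis.Analysis"
begin

definition L2 :: "'a measure \<Rightarrow> ('a \<Rightarrow> complex) set" where
  "L2 M = {f. f \<in> borel_measurable M \<and> integrable M (\<lambda>x. (cmod (f x))\<^sup>2)}"

definition L2norm :: "'a measure \<Rightarrow> ('a \<Rightarrow> complex) \<Rightarrow> real" where
  "L2norm M f = sqrt (\<integral>x. (cmod (f x))\<^sup>2 \<partial>M)"

definition bounded_op :: "'a measure \<Rightarrow> (('a \<Rightarrow> complex) \<Rightarrow> ('a \<Rightarrow> complex)) \<Rightarrow> bool" where
  "bounded_op M T \<longleftrightarrow>
     (\<forall>f\<in>L2 M. T f \<in> L2 M) \<and>
     (\<forall>f\<in>L2 M. \<forall>g\<in>L2 M. (AE x in M. f x = g x) \<longrightarrow> (AE x in M. T f x = T g x)) \<and>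
     (\<forall>f\<in>L2 M. \<forall>g\<in>L2 M. \<forall>c::complex.
        AE x in M. T (\<lambda>y. f y + c * g y) x = T f x + c * T g x) \<and>
     (\<exists>C. \<forall>f\<in>L2 M. L2norm M (T f) \<le> C * L2norm M f)"

definition op_norm :: "'a measure \<Rightarrow> (('a \<Rightarrow> complex) \<Rightarrow> ('a \<Rightarrow> complex)) \<Rightarrow> real" where
  "op_norm M T = Sup {L2norm M (T f) | f. f \<in> L2 M \<and> L2norm M f \<le> 1}"

definition mult_ind :: "'a set \<Rightarrow> ('a \<Rightarrow> complex) \<Rightarrow> ('a \<Rightarrow> complex)" where
  "mult_ind A f = (\<lambda>x. indicator A x * f x)"

definition cut_zero :: "'a measure \<Rightarrow> 'a set \<Rightarrow> (('a \<Rightarrow> complex) \<Rightarrow> ('a \<Rightarrow> complex)) \<Rightarrow> 'a set \<Rightarrow> bool" where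
  "cut_zero M F T G \<longleftrightarrow> (\<forall>f\<in>L2 M. AE x in M. mult_ind F (T (mult_ind G f)) x = 0)"

definition propagates_within :: "'a::metric_space measure \<Rightarrow> (('a \<Rightarrow> complex) \<Rightarrow> ('a \<Rightarrow> complex)) \<Rightarrow> real \<Rightarrow> bool" where
  "propagates_within M T r \<longleftrightarrow>
     (\<forall>F G. closed F \<and> closed G \<and> setdist F G > r \<longrightarrow> cut_zero M F T G)"

definition controlled :: "'a::metric_space measure \<Rightarrow> (('a \<Rightarrow> complex) \<Rightarrow> ('a \<Rightarrow> complex)) \<Rightarrow> bool" where
  "controlled M T \<longleftrightarrow> (\<exists>r>0. propagates_within M T r)"

definition propagation :: "'a::metric_space measure \<Rightarrow> (('a \<Rightarrow> complex) \<Rightarrow> ('a \<Rightarrow> complex)) \<Rightarrow> real" where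
  "propagation M T = Inf {r. 0 \<le> r \<and> propagates_within M T r}"

end

theory Submission imports Defs begin

definition Qn :: "'a measure \<Rightarrow> ('a \<Rightarrow> complex) \<Rightarrow> ennreal" where
  "Qn M g = (\<integral>\<^sup>+ x. ennreal ((cmod (g x))\<^sup>2) \<partial>M)"

lemma L2norm_nonneg: "L2norm M g \<ge> 0"
  unfolding L2norm_def by (simp add: integral_nonneg_AE)

lemma L2_Q: assumes "g \<in> L2 M" shows "Qn M g = ennreal ((L2norm M g)\<^sup>2)"
proof -
  have i: "integrable M (\<lambda>x. (cmod (g x))\<^sup>2)" using assms by (simp add: L2_def)
  have "(\<integral>x. (cmod (g x))\<^sup>2 \<partial>M) \<ge> 0" by (simp add: integral_nonneg_AE)
  then have "(L2norm M g)\<^sup>2 = (\<integral>x. (cmod (g x))\<^sup>2 \<partial>M)" unfolding L2norm_def by simp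
  then show ?thesis unfolding Qn_def using nn_integral_eq_integral[OF i] by simp
qed

lemma L2_le: assumes "u \<in> L2 M" "v \<in> L2 M" "Qn M u \<le> Qn M v" shows "L2norm M u \<le> L2norm M v"
proof -
  have "(L2norm M u)\<^sup>2 \<le> (L2norm M v)\<^sup>2" using assms L2_Q[of u M] L2_Q[of v M]
    by (simp add: ennreal_le_iff)
  then show ?thesis using L2norm_nonneg[of M v] power2_le_imp_le by blast
qed

lemma L2_measurable: "g \<in> L2 M \<Longrightarrow> g \<in> borel_measurable M" by (simp add: L2_def)

lemma mult_ind_L2: assumes "g \<in> L2 M" "B \<in> sets M" shows "mult_ind B g \<in> L2 M"
proof -
  have [measurable]: "g \<in> borel_measurable M" "B \<in> sets M" using assms by (auto simp: L2_def)
  have "integrable M (\<lambda>x. (cmod (g x))\<^sup>2)" using assms by (simp add: L2_def)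
  moreover have "(\<lambda>x. (cmod (mult_ind B g x))\<^sup>2) \<in> borel_measurable M" unfolding mult_ind_def by measurable
  moreover have "AE x in M. norm ((cmod (mult_ind B g x))\<^sup>2) \<le> norm ((cmod (g x))\<^sup>2)"
    by (auto simp: mult_ind_def indicator_def)
  ultimately have "integrable M (\<lambda>x. (cmod (mult_ind B g x))\<^sup>2)"
    using Bochner_Integration.integrable_bound[where f="\<lambda>x. (cmod (g x))\<^sup>2" and g="\<lambda>x. (cmod (mult_ind B g x))\<^sup>2"] by blast
  moreover have "mult_ind B g \<in> borel_measurable M" unfolding mult_ind_def by measurable
  ultimately show ?thesis by (simp add: L2_def)
qed

lemma Q_mult_ind_le: "Qn M (mult_ind B g) \<le> Qn M g"
  unfolding Qn_def by (intro nn_integral_mono) (auto simp: mult_ind_def indicator_def)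

lemma zero_L2: "(\<lambda>_. 0) \<in> L2 M" by (simp add: L2_def)

lemma scale_L2: assumes "g \<in> L2 M" shows "(\<lambda>x. c * g x) \<in> L2 M"
proof -
  have [measurable]: "g \<in> borel_measurable M" using assms by (simp add: L2_def)
  have "integrable M (\<lambda>x. (cmod c)\<^sup>2 * (cmod (g x))\<^sup>2)" using assms by (simp add: L2_def)
  then show ?thesis by (simp add: L2_def norm_mult power_mult_distrib)
qed

lemma Q_scale: assumes "g \<in> borel_measurable M" shows "Qn M (\<lambda>x. c * g x) = ennreal ((cmod c)\<^sup>2) * Qn M g"
proof -
  have [measurable]: "g \<in> borel_measurable M" using assms .
  have "Qn M (\<lambda>x. c * g x) = (\<integral>\<^sup>+ x. ennreal ((cmod c)\<^sup>2) * ennreal ((cmod (g x))\<^sup>2) \<partial>M)"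
    unfolding Qn_def by (simp add: norm_mult power_mult_distrib ennreal_mult)
  also have "\<dots> = ennreal ((cmod c)\<^sup>2) * Qn M g" unfolding Qn_def
    by (rule nn_integral_cmult) measurable
  finally show ?thesis .
qed

lemma Q_cong: "(AE x in M. u x = v x) \<Longrightarrow> Qn M u = Qn M v"
  unfolding Qn_def by (rule nn_integral_cong_AE) auto

lemma bo_L2: assumes "bounded_op M T" "f \<in> L2 M" shows "T f \<in> L2 M"
  using assms unfolding bounded_op_def by blast

lemma bo_ae: assumes "bounded_op M T" "f \<in> L2 M" "g \<in> L2 M" "AE x in M. f x = g x"
  shows "AE x in M. T f x = T g x"
proof -
  have "\<forall>f\<in>L2 M. \<forall>g\<in>L2 M. (AE x in M. f x = g x) \<longrightarrow> (AE x in M. T f x = T g x)"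
    using assms(1) unfolding bounded_op_def by (elim conjE)
  then show ?thesis using assms(2-4) by blast
qed

lemma bo_lin: assumes "bounded_op M T" "f \<in> L2 M" "g \<in> L2 M"
  shows "AE x in M. T (\<lambda>y. f y + c * g y) x = T f x + c * T g x"
proof -
  have "\<forall>f\<in>L2 M. \<forall>g\<in>L2 M. \<forall>c::complex.
        AE x in M. T (\<lambda>y. f y + c * g y) x = T f x + c * T g x"
    using assms(1) unfolding bounded_op_def by (elim conjE)
  then show ?thesis using assms(2,3) by blast
qed

lemma bo_C: assumes "bounded_op M T" obtains C where "\<And>f. f \<in> L2 M \<Longrightarrow> L2norm M (T f) \<le> C * L2norm M f"
  using assms unfolding bounded_op_def by blast

lemma T0: assumes "bounded_op M T" shows "AE x in M. T (\<lambda>_. 0) x = 0"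
proof -
  have "AE x in M. T (\<lambda>y. (\<lambda>_. 0) y + 1 * (\<lambda>_. 0) y) x = T (\<lambda>_. 0) x + 1 * T (\<lambda>_. 0) x"
    by (rule bo_lin[OF assms zero_L2 zero_L2])
  then show ?thesis by eventually_elim simp
qed

lemma Q_L2_eq: assumes "u \<in> L2 M" "v \<in> L2 M" "Qn M u = ennreal (k * (L2norm M v)\<^sup>2)" "k \<ge> 0"
  shows "(L2norm M u)\<^sup>2 = k * (L2norm M v)\<^sup>2"
  using assms L2_Q[of u M] by (simp add: ennreal_inj)

lemma bounded_op_mult: assumes "bounded_op M T" "B \<in> sets M"
  shows "bounded_op M (\<lambda>f. mult_ind B (T f))"
proof -
  have TL: "\<And>f. f \<in> L2 M \<Longrightarrow> T f \<in> L2 M" using bo_L2[OF assms(1)] .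
  obtain C where C: "\<forall>f\<in>L2 M. L2norm M (T f) \<le> C * L2norm M f" using bo_C[OF assms(1)] by metis
  have "\<exists>C. \<forall>f\<in>L2 M. L2norm M (mult_ind B (T f)) \<le> C * L2norm M f"
  proof (intro exI[of _ C] ballI)
    fix f assume f: "f \<in> L2 M"
    have "L2norm M (mult_ind B (T f)) \<le> L2norm M (T f)"
      by (rule L2_le) (auto intro: mult_ind_L2 TL f assms(2) Q_mult_ind_le)
    then show "L2norm M (mult_ind B (T f)) \<le> C * L2norm M f" using C f by fastforce
  qed
  moreover have "\<forall>f\<in>L2 M. \<forall>g\<in>L2 M. (AE x in M. f x = g x) \<longrightarrow> (AE x in M. mult_ind B (T f) x = mult_ind B (T g) x)"
  proof (intro ballI impI)
    fix f g assume "f \<in> L2 M" "g \<in> L2 M" "AE x in M. f x = g x"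
    then have "AE x in M. T f x = T g x" by (rule bo_ae[OF assms(1)])
    then show "AE x in M. mult_ind B (T f) x = mult_ind B (T g) x" by eventually_elim (simp add: mult_ind_def)
  qed
  moreover have "\<forall>f\<in>L2 M. \<forall>g\<in>L2 M. \<forall>c::complex.
        AE x in M. mult_ind B (T (\<lambda>y. f y + c * g y)) x = mult_ind B (T f) x + c * mult_ind B (T g) x"
  proof (intro ballI allI)
    fix f g c assume "f \<in> L2 M" "g \<in> L2 M"
    then have "AE x in M. T (\<lambda>y. f y + c * g y) x = T f x + c * T g x" by (rule bo_lin[OF assms(1)])
    then show "AE x in M. mult_ind B (T (\<lambda>y. f y + c * g y)) x = mult_ind B (T f) x + c * mult_ind B (T g) x"
      by eventually_elim (simp add: mult_ind_def algebra_simps)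
  qed
  moreover have "\<forall>f\<in>L2 M. mult_ind B (T f) \<in> L2 M" using TL mult_ind_L2 assms(2) by blast
  ultimately show ?thesis unfolding bounded_op_def by (intro conjI) (assumption | blast)+
qed

lemma op_bdd: assumes "bounded_op M A" shows "bdd_above {L2norm M (A f) | f. f \<in> L2 M \<and> L2norm M f \<le> 1}"
proof -
  obtain C where C: "\<forall>f\<in>L2 M. L2norm M (A f) \<le> C * L2norm M f" using bo_C[OF assms] by metis
  show ?thesis unfolding bdd_above_def
  proof (intro exI[of _ "max C 0"] ballI)
    fix y assume "y \<in> {L2norm M (A f) | f. f \<in> L2 M \<and> L2norm M f \<le> 1}"
    then obtain f where f: "f \<in> L2 M" "L2norm M f \<le> 1" "y = L2norm M (A f)" by blast
    have "C * L2norm M f \<le> max C 0 * L2norm M f" using L2norm_nonneg[of M f] by (simp add: mult_right_mono)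
    also have "\<dots> \<le> max C 0" using f(2) L2norm_nonneg[of M f] by (simp add: mult_left_le)
    finally show "y \<le> max C 0" using C f by fastforce
  qed
qed

lemma op_norm_nonneg: assumes "bounded_op M A" shows "op_norm M A \<ge> 0"
proof -
  have "L2norm M (A (\<lambda>_. 0)) \<in> {L2norm M (A f) | f. f \<in> L2 M \<and> L2norm M f \<le> 1}"
    using zero_L2 by (force simp: L2norm_def)
  then have "L2norm M (A (\<lambda>_. 0)) \<le> op_norm M A" unfolding op_norm_def using op_bdd[OF assms] by (rule cSup_upper)
  then show ?thesis using L2norm_nonneg[of M] by (meson order_trans)
qed

lemma op_norm_le: assumes "bounded_op M A" "K \<ge> 0" "\<And>f. f \<in> L2 M \<Longrightarrow> L2norm M (A f) \<le> K * L2norm M f"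
  shows "op_norm M A \<le> K"
  unfolding op_norm_def
proof (rule cSup_least)
  show "{L2norm M (A f) |f. f \<in> L2 M \<and> L2norm M f \<le> 1} \<noteq> {}" using zero_L2 by (force simp: L2norm_def)
  fix y assume "y \<in> {L2norm M (A f) | f. f \<in> L2 M \<and> L2norm M f \<le> 1}"
  then obtain f where f: "f \<in> L2 M" "L2norm M f \<le> 1" "y = L2norm M (A f)" by blast
  have "K * L2norm M f \<le> K" using f(2) assms(2) by (simp add: mult_left_le)
  then show "y \<le> K" using assms(3)[OF f(1)] f(3) by linarith
qed

lemma op_norm_bound: assumes A: "bounded_op M A" and g: "g \<in> L2 M"
  shows "L2norm M (A g) \<le> op_norm M A * L2norm M g"
proof -
  have AL: "\<And>f. f \<in> L2 M \<Longrightarrow> A f \<in> L2 M" using bo_L2[OF A] .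
  have gm[measurable]: "g \<in> borel_measurable M" using g by (simp add: L2_def)
  have lin: "\<And>f h c. f \<in> L2 M \<Longrightarrow> h \<in> L2 M \<Longrightarrow> AE x in M. A (\<lambda>y. f y + c * h y) x = A f x + c * A h x"
    using bo_lin[OF A] .
  show ?thesis
  proof (cases "L2norm M g = 0")
    case True
    then have "Qn M g = 0" using L2_Q[OF g] by simp
    then have "AE x in M. g x = 0" unfolding Qn_def by (subst (asm) nn_integral_0_iff_AE) auto
    then have "AE x in M. A g x = A (\<lambda>_. 0) x" by (rule bo_ae[OF A g zero_L2])
    then have "AE x in M. A g x = 0" using T0[OF A] by eventually_elim simp
    then have "Qn M (A g) = Qn M (\<lambda>_. 0)" by (rule Q_cong)
    then have "Qn M (A g) = 0" by (simp add: Qn_def)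
    then have "(L2norm M (A g))\<^sup>2 = 0" using L2_Q[OF AL[OF g]] by simp
    then show ?thesis using True by simp
  next
    case False
    define c where "c = L2norm M g"
    have cpos: "c > 0" using False L2norm_nonneg[of M g] c_def by simp
    define c' where "c' = complex_of_real (1 / c)"
    define g' where "g' = (\<lambda>x. c' * g x)"
    have g'L: "g' \<in> L2 M" unfolding g'_def using scale_L2[OF g] .
    have "AE x in M. A (\<lambda>y. (\<lambda>_. 0) y + c' * g y) x = A (\<lambda>_. 0) x + c' * A g x"
      by (rule lin[OF zero_L2 g])
    then have "AE x in M. A g' x = c' * A g x" using T0[OF A] unfolding g'_def by eventually_elim simp
    then have "Qn M (A g') = Qn M (\<lambda>x. c' * A g x)" by (rule Q_cong)
    also have "\<dots> = ennreal ((cmod c')\<^sup>2) * Qn M (A g)" by (rule Q_scale) (use AL[OF g] in \<open>simp add: L2_def\<close>)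
    also have "\<dots> = ennreal ((cmod c')\<^sup>2 * (L2norm M (A g))\<^sup>2)" using L2_Q[OF AL[OF g]] by (simp add: ennreal_mult)
    finally have e1: "(L2norm M (A g'))\<^sup>2 = (cmod c')\<^sup>2 * (L2norm M (A g))\<^sup>2"
      using Q_L2_eq[OF AL[OF g'L] AL[OF g]] by simp
    have "Qn M g' = ennreal ((cmod c')\<^sup>2) * Qn M g" unfolding g'_def by (rule Q_scale) simp
    also have "\<dots> = ennreal ((cmod c')\<^sup>2 * (L2norm M g)\<^sup>2)" using L2_Q[OF g] by (simp add: ennreal_mult)
    finally have "(L2norm M g')\<^sup>2 = (cmod c')\<^sup>2 * (L2norm M g)\<^sup>2"
      using Q_L2_eq[OF g'L g] by simp
    moreover have "cmod c' = 1 / c" using cpos unfolding c'_def by (simp add: norm_divide)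
    ultimately have "(L2norm M g')\<^sup>2 = 1" using cpos unfolding c_def by (simp add: power_divide)
    then have "L2norm M g' = 1" using L2norm_nonneg[of M g'] by (simp add: power2_eq_1_iff)
    then have "L2norm M (A g') \<le> op_norm M A" unfolding op_norm_def using op_bdd[OF A] g'L
      by (intro cSup_upper) auto
    then have "(L2norm M (A g'))\<^sup>2 \<le> (op_norm M A)\<^sup>2" using L2norm_nonneg[of M "A g'"] power_mono by blast
    then have "(1/c)\<^sup>2 * (L2norm M (A g))\<^sup>2 \<le> (op_norm M A)\<^sup>2" using e1 \<open>cmod c' = 1 / c\<close> by simp
    then have "(L2norm M (A g))\<^sup>2 \<le> (op_norm M A * c)\<^sup>2" using cpos by (simp add: field_simps power_divide power_mult_distrib)
    then have "L2norm M (A g) \<le> op_norm M A * c"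
      using op_norm_nonneg[OF A] cpos power2_le_imp_le by fastforce
    then show ?thesis unfolding c_def .
  qed
qed

lemma prop_at_inf: assumes "\<exists>r>0. propagates_within M T r"
  shows "propagates_within M T (propagation M T)" and "propagation M T \<ge> 0"
proof -
  let ?S = "{r. 0 \<le> r \<and> propagates_within M T r}"
  have ne: "?S \<noteq> {}" using assms by (auto intro: less_imp_le)
  have bb: "bdd_below ?S" by (auto simp: bdd_below_def)
  show "propagation M T \<ge> 0" unfolding propagation_def using ne by (intro cInf_greatest) auto
  show "propagates_within M T (propagation M T)"
    unfolding propagates_within_def
  proof (intro allI impI)
    fix F G :: "'a set" assume h: "closed F \<and> closed G \<and> propagation M T < setdist F G"
    then have "Inf ?S < setdist F G" unfolding propagation_def by simp
    then obtain r where "r \<in> ?S" "r < setdist F G" using cInf_lessD[OF ne] by blast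
    then show "cut_zero M F T G" using h unfolding propagates_within_def by blast
  qed
qed

lemma mult_ind_empty: "mult_ind {} f = (\<lambda>_. 0)" by (simp add: mult_ind_def)

lemma locality:
  fixes M :: "'a::metric_space measure" and z :: 'a
  assumes sets: "sets M = sets borel" and T: "bounded_op M T" and pw: "propagates_within M T d"
    and d: "d \<ge> 0" and g: "g \<in> L2 M"
  shows "AE x in M. mult_ind (cball z 1) (T g) x = mult_ind (cball z 1) (T (mult_ind (cball z (d+1)) g)) x"
proof -
  define F where "F = cball z 1"
  define U where "U = cball z (d+1)"
  define G where "G = - cball z (d+1)"
  define Gn where "Gn = (\<lambda>n::nat. {y. d + 1 + 1 / real (Suc n) \<le> dist z y})"
  have clGn: "closed (Gn n)" for n unfolding Gn_def by (intro closed_Collect_le continuous_intros)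
  have [measurable]: "F \<in> sets M" "U \<in> sets M" "G \<in> sets M" "Gn n \<in> sets M" for n
    using clGn by (auto simp: sets F_def U_def G_def borel_closed borel_comp)
  have gm[measurable]: "g \<in> borel_measurable M" using g by (simp add: L2_def)
  have TL: "\<And>f. f \<in> L2 M \<Longrightarrow> T f \<in> L2 M" using bo_L2[OF T] .
  have lin: "\<And>f h c. f \<in> L2 M \<Longrightarrow> h \<in> L2 M \<Longrightarrow> AE x in M. T (\<lambda>y. f y + c * h y) x = T f x + c * T h x"
    using bo_lin[OF T] .
  obtain C where C: "\<forall>f\<in>L2 M. L2norm M (T f) \<le> C * L2norm M f" using bo_C[OF T] by metis
  define K where "K = (max C 0)\<^sup>2"
  have QT: "Qn M (T f) \<le> ennreal K * Qn M f" if f: "f \<in> L2 M" for f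
  proof -
    have "L2norm M (T f) \<le> max C 0 * L2norm M f" using C f L2norm_nonneg[of M f]
      by (meson max.cobounded1 mult_right_mono order_trans)
    then have "(L2norm M (T f))\<^sup>2 \<le> K * (L2norm M f)\<^sup>2" unfolding K_def
      using L2norm_nonneg[of M "T f"] by (metis power_mono power_mult_distrib)
    then show ?thesis using L2_Q[OF f] L2_Q[OF TL[OF f]] by (simp add: ennreal_mult[symmetric] K_def)
  qed
  define u where "u = mult_ind U g"
  define h where "h = mult_ind G g"
  define rn where "rn = (\<lambda>n. mult_ind (G - Gn n) g)"
  have uL: "u \<in> L2 M" and hL: "h \<in> L2 M" and rL: "rn n \<in> L2 M" and hnL: "mult_ind (Gn n) g \<in> L2 M" for n
    unfolding u_def h_def rn_def by (auto intro!: mult_ind_L2 g)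
  have "g = (\<lambda>y. u y + 1 * h y)" unfolding u_def h_def U_def G_def mult_ind_def
    by (auto simp: indicator_def)
  then have e1: "AE x in M. T g x = T u x + T h x" using lin[OF uL hL, of 1] by simp
  have cut: "AE x in M. mult_ind F (T (mult_ind (Gn n) g)) x = 0" for n
  proof (cases "Gn n = {}")
    case True
    have "AE x in M. T (\<lambda>_. 0) x = 0" using T0[OF T] .
    moreover have "mult_ind (Gn n) g = (\<lambda>_. 0)" using True by (simp add: mult_ind_def)
    ultimately show ?thesis by (simp add: mult_ind_def) (auto elim: eventually_mono)
  next
    case False
    have "d + 1 / real (Suc n) \<le> setdist F (Gn n)"
      unfolding le_setdist_iff
    proof (intro conjI ballI impI)
      fix x y assume "x \<in> F" "y \<in> Gn n"
      then have "dist z x \<le> 1" "d + 1 + 1 / real (Suc n) \<le> dist z y" unfolding F_def Gn_def by auto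
      moreover have "dist z y \<le> dist z x + dist x y" by (rule dist_triangle)
      ultimately show "d + 1 / real (Suc n) \<le> dist x y" by linarith
    next
      assume "F = {} \<or> Gn n = {}" then show "d + 1 / real (Suc n) \<le> 0" using False unfolding F_def by auto
    qed
    moreover have "1 / real (Suc n) > 0" by simp
    ultimately have "setdist F (Gn n) > d" by linarith
    then have "cut_zero M F T (Gn n)" using pw clGn unfolding propagates_within_def F_def by auto
    then show ?thesis unfolding cut_zero_def using g by blast
  qed
  have hr: "AE x in M. mult_ind F (T h) x = mult_ind F (T (rn n)) x" for n
  proof -
    have pos: "\<not> (d + 1 + 1 / real (Suc n) \<le> dist z y \<and> dist z y \<le> d + 1)" for y
    proof -
      have "0 < 1 / real (Suc n)" by simp
      then show ?thesis by linarith
    qed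
    have "h = (\<lambda>y. mult_ind (Gn n) g y + 1 * rn n y)" unfolding h_def rn_def mult_ind_def G_def Gn_def
      using pos by (intro ext) (auto simp: indicator_def simp del: of_nat_Suc dest: order_trans)
    then have "AE x in M. T h x = T (mult_ind (Gn n) g) x + T (rn n) x" using lin[OF hnL[of n] rL[of n], of 1] by simp
    then show ?thesis using cut[of n] by eventually_elim (simp add: mult_ind_def algebra_simps)
  qed
  define fn where "fn = (\<lambda>n x. ennreal K * ennreal ((cmod (rn n x))\<^sup>2))"
  have fnm[measurable]: "fn n \<in> borel_measurable M" for n unfolding fn_def rn_def mult_ind_def by measurable
  have bound: "Qn M (mult_ind F (T h)) \<le> integral\<^sup>N M (fn n)" for n
  proof -
    have "Qn M (mult_ind F (T h)) = Qn M (mult_ind F (T (rn n)))" using hr[of n] by (rule Q_cong)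
    also have "\<dots> \<le> Qn M (T (rn n))" by (rule Q_mult_ind_le)
    also have "\<dots> \<le> ennreal K * Qn M (rn n)" by (rule QT[OF rL])
    also have "\<dots> = integral\<^sup>N M (fn n)" unfolding fn_def Qn_def
      by (rule nn_integral_cmult[symmetric]) (unfold rn_def mult_ind_def, measurable)
    finally show ?thesis .
  qed
  have "(\<integral>\<^sup>+ x. (INF n. fn n x) \<partial>M) = (INF n. integral\<^sup>N M (fn n))"
  proof (rule nn_integral_monotone_convergence_INF_AE[where i=0])
    show "AE x in M. fn (Suc n) x \<le> fn n x" for n
    proof (intro AE_I2)
      fix x
      have "1 / real (Suc (Suc n)) \<le> 1 / real (Suc n)" by (simp add: frac_le)
      then have "x \<in> Gn n \<Longrightarrow> x \<in> Gn (Suc n)" unfolding Gn_def by auto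
      then show "fn (Suc n) x \<le> fn n x" unfolding fn_def rn_def mult_ind_def
        by (auto simp: indicator_def intro!: mult_left_mono)
    qed
    have "integral\<^sup>N M (fn 0) = ennreal K * Qn M (rn 0)" unfolding fn_def Qn_def
      by (rule nn_integral_cmult) (unfold rn_def mult_ind_def, measurable)
    also have "\<dots> = ennreal (K * (L2norm M (rn 0))\<^sup>2)" using L2_Q[OF rL[of 0]] K_def
      by (simp add: ennreal_mult)
    finally show "integral\<^sup>N M (fn 0) < \<infinity>" by simp
  qed (rule fnm)
  moreover have "(INF n. fn n x) = 0" for x
  proof -
    have "\<exists>n. rn n x = 0"
    proof (cases "x \<in> G")
      case False then show ?thesis unfolding rn_def mult_ind_def by auto
    next
      case True
      then have "dist z x - (d + 1) > 0" unfolding G_def by auto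
      then obtain n where "inverse (real (Suc n)) < dist z x - (d + 1)" using reals_Archimedean by blast
      then have "x \<in> Gn n" unfolding Gn_def by (auto simp: field_simps)
      then show ?thesis unfolding rn_def mult_ind_def by (intro exI[of _ n]) auto
    qed
    then obtain n where "rn n x = 0" by blast
    then have "fn n x = 0" unfolding fn_def by simp
    then have "(INF n. fn n x) \<le> 0" by (metis INF_lower2 UNIV_I order_refl)
    then show ?thesis by simp
  qed
  ultimately have "(INF n. integral\<^sup>N M (fn n)) = 0" by simp
  then have "Qn M (mult_ind F (T h)) \<le> 0" using bound by (metis INF_greatest)
  then have "Qn M (mult_ind F (T h)) = 0" by simp
  moreover have "mult_ind F (T h) \<in> borel_measurable M"
  proof -
    have [measurable]: "T h \<in> borel_measurable M" using TL[OF hL] by (simp add: L2_def)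
    show ?thesis unfolding mult_ind_def by measurable
  qed
  ultimately have "AE x in M. ennreal ((cmod (mult_ind F (T h) x))\<^sup>2) = 0"
    unfolding Qn_def by (subst (asm) nn_integral_0_iff_AE) auto
  then have "AE x in M. mult_ind F (T h) x = 0" by eventually_elim simp
  with e1 show ?thesis unfolding F_def[symmetric] U_def[symmetric] u_def[symmetric]
    by eventually_elim (simp add: mult_ind_def algebra_simps)
qed

lemma L2norm_mult_ind_le: "u \<in> L2 M \<Longrightarrow> B \<in> sets M \<Longrightarrow> L2norm M (mult_ind B u) \<le> L2norm M u"
  by (rule L2_le) (auto intro: mult_ind_L2 Q_mult_ind_le)

theorem lemma3p6:
  fixes \<mu> :: "'a::heine_borel measure"
    and Z :: "'a set"
    and N :: "real \<Rightarrow> nat"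
    and T :: "('a \<Rightarrow> complex) \<Rightarrow> ('a \<Rightarrow> complex)"
  assumes noncompact: "\<not> compact (UNIV :: 'a set)"
    and space: "space \<mu> = UNIV"
    and sets: "sets \<mu> = sets borel"
    and support: "\<And>x r. r > 0 \<Longrightarrow> emeasure \<mu> (ball x r) > 0"
    and ball_pos: "\<And>x r. r > 0 \<Longrightarrow> measure \<mu> (cball x r) > 0"
    and ball_bdd: "\<And>r. r > 0 \<Longrightarrow> \<exists>C::real. \<forall>x. emeasure \<mu> (cball x r) \<le> ennreal C"
    and inf_half: "\<exists>c>0. \<forall>x. measure \<mu> (cball x (1/2)) \<ge> c"
    and cover: "\<And>x. \<exists>z\<in>Z. x \<in> cball z 1"
    and count: "\<And>x r. r \<ge> 1 \<Longrightarrow>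
        finite {z\<in>Z. cball z r \<inter> cball x r \<noteq> {}} \<and>
        card {z\<in>Z. cball z r \<inter> cball x r \<noteq> {}} \<le> N r"
    and bounded: "bounded_op \<mu> T"
    and ctrl: "controlled \<mu> T"
  shows "op_norm \<mu> T \<le>
    sqrt (real (N (propagation \<mu> T + 1))) *
      (SUP x. op_norm \<mu> (\<lambda>f. mult_ind (cball x 1) (T f)))"
proof -
  define d where "d = propagation \<mu> T"
  have pw: "propagates_within \<mu> T d" and d0: "d \<ge> 0"
    using prop_at_inf[of \<mu> T] ctrl unfolding controlled_def d_def by auto
  define S where "S = (SUP x. op_norm \<mu> (\<lambda>f. mult_ind (cball x 1) (T f)))"
  define N' where "N' = real (N (d + 1))"
  have cb[measurable]: "cball x r \<in> sets \<mu>" for x :: 'a and r by (simp add: sets borel_closed)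
  have TL: "\<And>f. f \<in> L2 \<mu> \<Longrightarrow> T f \<in> L2 \<mu>" using bo_L2[OF bounded] .
  have Ab: "bounded_op \<mu> (\<lambda>f. mult_ind (cball z 1) (T f))" for z
    by (rule bounded_op_mult[OF bounded cb])
  obtain C where C: "\<forall>f\<in>L2 \<mu>. L2norm \<mu> (T f) \<le> C * L2norm \<mu> f" using bo_C[OF bounded] by metis
  have opA: "op_norm \<mu> (\<lambda>f. mult_ind (cball z 1) (T f)) \<le> max C 0" for z
  proof (rule op_norm_le[OF Ab])
    fix f assume f: "f \<in> L2 \<mu>"
    have "L2norm \<mu> (mult_ind (cball z 1) (T f)) \<le> L2norm \<mu> (T f)" by (rule L2norm_mult_ind_le[OF TL[OF f] cb])
    also have "\<dots> \<le> C * L2norm \<mu> f" using C f by blast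
    also have "\<dots> \<le> max C 0 * L2norm \<mu> f" using L2norm_nonneg[of \<mu> f] by (simp add: mult_right_mono)
    finally show "L2norm \<mu> (mult_ind (cball z 1) (T f)) \<le> max C 0 * L2norm \<mu> f" .
  qed simp
  have opS: "op_norm \<mu> (\<lambda>f. mult_ind (cball z 1) (T f)) \<le> S" for z
    unfolding S_def by (rule cSUP_upper) (simp, rule bdd_aboveI2[where M="max C 0"], rule opA)
  have S0: "S \<ge> 0" using opS[of undefined] op_norm_nonneg[OF Ab[of undefined]] by linarith
  have N'0: "N' \<ge> 0" unfolding N'_def by simp
  have main: "Qn \<mu> (T f) \<le> ennreal (S\<^sup>2 * N') * Qn \<mu> f" if f: "f \<in> L2 \<mu>" for f
  proof -
    have fm[measurable]: "f \<in> borel_measurable \<mu>" using f by (simp add: L2_def)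
    have Tfm[measurable]: "T f \<in> borel_measurable \<mu>" using TL[OF f] by (simp add: L2_def)
    define x0 :: 'a where "x0 = undefined"
    have step: "Qn \<mu> (mult_ind (cball x0 (real n)) (T f)) \<le> ennreal (S\<^sup>2 * N') * Qn \<mu> f" for n :: nat
    proof -
      define Zn where "Zn = {z\<in>Z. dist x0 z \<le> real n + 1}"
      have "Zn \<subseteq> {z\<in>Z. cball z (real n + 1) \<inter> cball x0 (real n + 1) \<noteq> {}}"
      proof
        fix z assume "z \<in> Zn"
        then have "z \<in> Z" "z \<in> cball z (real n + 1) \<inter> cball x0 (real n + 1)" unfolding Zn_def by auto
        then show "z \<in> {z\<in>Z. cball z (real n + 1) \<inter> cball x0 (real n + 1) \<noteq> {}}" by blast
      qed
      then have finZ: "finite Zn" using count[of "real n + 1" x0] finite_subset by auto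
      have "Qn \<mu> (mult_ind (cball x0 (real n)) (T f)) \<le>
          (\<integral>\<^sup>+ x. (\<Sum>z\<in>Zn. ennreal ((cmod (mult_ind (cball z 1) (T f) x))\<^sup>2)) \<partial>\<mu>)"
        unfolding Qn_def
      proof (rule nn_integral_mono)
        fix x
        show "ennreal ((cmod (mult_ind (cball x0 (real n)) (T f) x))\<^sup>2)
            \<le> (\<Sum>z\<in>Zn. ennreal ((cmod (mult_ind (cball z 1) (T f) x))\<^sup>2))"
        proof (cases "x \<in> cball x0 (real n)")
          case True
          obtain z where z: "z \<in> Z" "x \<in> cball z 1" using cover by blast
          have "dist x0 z \<le> dist x0 x + dist x z" by (rule dist_triangle)
          moreover have "dist x z \<le> 1" using z(2) by (simp add: dist_commute)
          moreover have "dist x0 x \<le> real n" using True by simp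
          ultimately have "dist x0 z \<le> real n + 1" by linarith
          then have "z \<in> Zn" using z(1) unfolding Zn_def by blast
          then have "ennreal ((cmod (mult_ind (cball z 1) (T f) x))\<^sup>2)
              \<le> (\<Sum>z\<in>Zn. ennreal ((cmod (mult_ind (cball z 1) (T f) x))\<^sup>2))"
            using finZ by (intro member_le_sum) auto
          then show ?thesis using True z by (simp add: mult_ind_def)
        qed (simp add: mult_ind_def)
      qed
      also have "\<dots> = (\<Sum>z\<in>Zn. Qn \<mu> (mult_ind (cball z 1) (T f)))"
        unfolding Qn_def by (rule nn_integral_sum) (unfold mult_ind_def, measurable)
      also have "\<dots> \<le> (\<Sum>z\<in>Zn. ennreal (S\<^sup>2) * Qn \<mu> (mult_ind (cball z (d+1)) f))"
      proof (rule sum_mono)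
        fix z :: 'a
        define u where "u = mult_ind (cball z (d+1)) f"
        have uL: "u \<in> L2 \<mu>" unfolding u_def by (rule mult_ind_L2[OF f cb])
        have "Qn \<mu> (mult_ind (cball z 1) (T f)) = Qn \<mu> (mult_ind (cball z 1) (T u))"
        proof -
          have "AE x in \<mu>. mult_ind (cball z 1) (T f) x = mult_ind (cball z 1) (T (mult_ind (cball z (d+1)) f)) x"
            by (rule locality[OF sets bounded pw d0 f])
          then show ?thesis unfolding u_def by (rule Q_cong)
        qed
        also have "\<dots> = ennreal ((L2norm \<mu> (mult_ind (cball z 1) (T u)))\<^sup>2)"
          by (rule L2_Q[OF mult_ind_L2[OF TL[OF uL] cb]])
        also have "\<dots> \<le> ennreal ((S * L2norm \<mu> u)\<^sup>2)"
        proof -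
          have "L2norm \<mu> (mult_ind (cball z 1) (T u)) \<le> op_norm \<mu> (\<lambda>f. mult_ind (cball z 1) (T f)) * L2norm \<mu> u"
            using op_norm_bound[OF Ab uL] by simp
          also have "\<dots> \<le> S * L2norm \<mu> u" using opS[of z] L2norm_nonneg[of \<mu> u] by (simp add: mult_right_mono)
          finally show ?thesis using L2norm_nonneg[of \<mu> "mult_ind (cball z 1) (T u)"]
            by (intro ennreal_leI power_mono) auto
        qed
        also have "\<dots> = ennreal (S\<^sup>2) * Qn \<mu> u" using L2_Q[OF uL]
          by (simp add: ennreal_mult power_mult_distrib)
        finally show "Qn \<mu> (mult_ind (cball z 1) (T f)) \<le> ennreal (S\<^sup>2) * Qn \<mu> (mult_ind (cball z (d+1)) f)"
          unfolding u_def .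
      qed
      also have "\<dots> = ennreal (S\<^sup>2) * (\<integral>\<^sup>+ x. (\<Sum>z\<in>Zn. ennreal ((cmod (mult_ind (cball z (d+1)) f x))\<^sup>2)) \<partial>\<mu>)"
      proof -
        have "(\<Sum>z\<in>Zn. Qn \<mu> (mult_ind (cball z (d+1)) f)) = (\<integral>\<^sup>+ x. (\<Sum>z\<in>Zn. ennreal ((cmod (mult_ind (cball z (d+1)) f x))\<^sup>2)) \<partial>\<mu>)"
          unfolding Qn_def by (rule nn_integral_sum[symmetric]) (unfold mult_ind_def, measurable)
        then show ?thesis by (simp only: sum_distrib_left[symmetric])
      qed
      also have "\<dots> \<le> ennreal (S\<^sup>2) * (\<integral>\<^sup>+ x. ennreal N' * ennreal ((cmod (f x))\<^sup>2) \<partial>\<mu>)"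
      proof (intro mult_left_mono nn_integral_mono)
        fix x :: 'a
        let ?P = "\<lambda>z. x \<in> cball z (d+1)"
        have "(\<Sum>z\<in>Zn. ennreal ((cmod (mult_ind (cball z (d+1)) f x))\<^sup>2))
            = ennreal (\<Sum>z\<in>Zn. (if ?P z then (cmod (f x))\<^sup>2 else 0))"
          by (subst sum_ennreal[symmetric]) (auto simp: mult_ind_def indicator_def intro!: sum.cong arg_cong[where f=ennreal])
        also have "(\<Sum>z\<in>Zn. (if ?P z then (cmod (f x))\<^sup>2 else 0)) = real (card {z\<in>Zn. ?P z}) * (cmod (f x))\<^sup>2"
          using sum.inter_filter[OF finZ, of "\<lambda>_. (cmod (f x))\<^sup>2" ?P] by simp
        also have "real (card {z\<in>Zn. ?P z}) \<le> N'"
        proof -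
          have "{z\<in>Zn. ?P z} \<subseteq> {z\<in>Z. cball z (d+1) \<inter> cball x (d+1) \<noteq> {}}"
          proof
            fix z assume "z \<in> {z\<in>Zn. ?P z}"
            then have "z \<in> Z" "x \<in> cball z (d+1) \<inter> cball x (d+1)" unfolding Zn_def using d0 by auto
            then show "z \<in> {z\<in>Z. cball z (d+1) \<inter> cball x (d+1) \<noteq> {}}" by blast
          qed
          then have "card {z\<in>Zn. ?P z} \<le> card {z\<in>Z. cball z (d+1) \<inter> cball x (d+1) \<noteq> {}}"
            using count[of "d+1" x] d0 by (intro card_mono) auto
          also have "\<dots> \<le> N (d+1)" using count[of "d+1" x] d0 by auto
          finally show ?thesis unfolding N'_def by simp
        qed
        then have "ennreal (real (card {z\<in>Zn. ?P z}) * (cmod (f x))\<^sup>2) \<le> ennreal (N' * (cmod (f x))\<^sup>2)"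
          by (intro ennreal_leI mult_right_mono) auto
        finally show "(\<Sum>z\<in>Zn. ennreal ((cmod (mult_ind (cball z (d+1)) f x))\<^sup>2)) \<le> ennreal N' * ennreal ((cmod (f x))\<^sup>2)"
          using ennreal_mult[OF N'0 zero_le_power2[of "cmod (f x)"]] by simp
      qed simp
      also have "\<dots> = ennreal (S\<^sup>2 * N') * Qn \<mu> f"
      proof -
        have "(\<integral>\<^sup>+ x. ennreal N' * ennreal ((cmod (f x))\<^sup>2) \<partial>\<mu>) = ennreal N' * Qn \<mu> f"
          unfolding Qn_def by (rule nn_integral_cmult) measurable
        moreover have "ennreal (S\<^sup>2 * N') = ennreal (S\<^sup>2) * ennreal N'"
          by (rule ennreal_mult[OF zero_le_power2 N'0])
        ultimately show ?thesis by (simp add: mult.assoc)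
      qed
      finally show ?thesis .
    qed
    define hn where "hn = (\<lambda>n::nat. \<lambda>x. ennreal ((cmod (mult_ind (cball x0 (real n)) (T f) x))\<^sup>2))"
    have "Qn \<mu> (T f) = (\<integral>\<^sup>+ x. (SUP n. hn n x) \<partial>\<mu>)" unfolding Qn_def
    proof (rule nn_integral_cong)
      fix x
      obtain n :: nat where "dist x0 x \<le> real n" using real_arch_simple by blast
      then have "hn n x = ennreal ((cmod (T f x))\<^sup>2)" unfolding hn_def mult_ind_def by simp
      moreover have "hn m x \<le> ennreal ((cmod (T f x))\<^sup>2)" for m unfolding hn_def mult_ind_def
        by (auto simp: indicator_def)
      show "ennreal ((cmod (T f x))\<^sup>2) = (SUP n. hn n x)"
      proof (rule antisym)
        show "ennreal ((cmod (T f x))\<^sup>2) \<le> (SUP n. hn n x)"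
          using \<open>hn n x = ennreal ((cmod (T f x))\<^sup>2)\<close> by (metis SUP_upper UNIV_I)
        show "(SUP n. hn n x) \<le> ennreal ((cmod (T f x))\<^sup>2)"
          using \<open>\<And>m. hn m x \<le> ennreal ((cmod (T f x))\<^sup>2)\<close> by (rule SUP_least)
      qed
    qed
    also have "\<dots> = (SUP n. integral\<^sup>N \<mu> (hn n))"
    proof (rule nn_integral_monotone_convergence_SUP)
      show "incseq hn" unfolding incseq_def le_fun_def hn_def mult_ind_def
        by (auto simp: indicator_def)
      show "hn i \<in> borel_measurable \<mu>" for i unfolding hn_def mult_ind_def by measurable
    qed
    also have "\<dots> \<le> ennreal (S\<^sup>2 * N') * Qn \<mu> f"
      using step unfolding hn_def Qn_def by (intro SUP_least) auto
    finally show ?thesis .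
  qed
  have "op_norm \<mu> T \<le> sqrt N' * S"
  proof (rule op_norm_le[OF bounded])
    show "0 \<le> sqrt N' * S" using S0 N'0 by simp
    fix f assume f: "f \<in> L2 \<mu>"
    have "ennreal ((L2norm \<mu> (T f))\<^sup>2) \<le> ennreal (S\<^sup>2 * N' * (L2norm \<mu> f)\<^sup>2)"
    proof -
      have "ennreal (S\<^sup>2 * N') * ennreal ((L2norm \<mu> f)\<^sup>2) = ennreal (S\<^sup>2 * N' * (L2norm \<mu> f)\<^sup>2)"
        using N'0 by (intro ennreal_mult[symmetric]) auto
      then show ?thesis using main[OF f] unfolding L2_Q[OF f] L2_Q[OF TL[OF f]] by simp
    qed
    then have "(L2norm \<mu> (T f))\<^sup>2 \<le> S\<^sup>2 * N' * (L2norm \<mu> f)\<^sup>2"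
      using N'0 by (subst (asm) ennreal_le_iff) auto
    also have "\<dots> = (sqrt N' * S * L2norm \<mu> f)\<^sup>2" using N'0 by (simp add: power_mult_distrib)
    finally have sq: "(L2norm \<mu> (T f))\<^sup>2 \<le> (sqrt N' * S * L2norm \<mu> f)\<^sup>2" .
    have "0 \<le> sqrt N' * S * L2norm \<mu> f"
      using S0 N'0 L2norm_nonneg[of \<mu> f] real_sqrt_ge_zero[OF N'0] by (intro mult_nonneg_nonneg)
    then show "L2norm \<mu> (T f) \<le> sqrt N' * S * L2norm \<mu> f" by (rule power2_le_imp_le[OF sq])
  qed
  then show ?thesis unfolding S_def N'_def d_def .
qed

end
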